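(* Let $S$ be a specialisation independent scheduling rule, $V$ a finite set of variables, $G$ and $X$ p-goals, $\gamma$ a substitution and $\underline\tau$ a shifting such that $X+G\gamma\underline{\tau}$ is defined. If there is a p-SLD derivation $X+G\gamma\underline{\tau}\xrightarrow{S,D}\cdot$ via $S$, then there is a p-SLD derivation $Dr=(G\xrightarrow{S,\,D/(G\gamma\underline{\tau})}\cdot)$ via $S$ with $nvar(Dr)\cap V=\emptyset$.
   Context: A p-atom is a pair $a[p]$ of an atom $a$ and a rational priority $p$. A p-goal is a finite set of p-atoms with pairwise distinct priorities, regarded as a list ordered by increasing priority. Substitutions act on atoms and leave priorities unchanged. A clause is $h\leftarrow B$ with $h$ an atom and $B$ a p-goal. For p-goals with no common priority, $F+G=F\cup G$; $F|G$ denotes $F+G$ when all priorities of $F$ are smaller than those of $G$. A shifting $\underline{\pi}$ is a strictly increasing bijection $\mathbb{Q}\to\mathbb{Q}$ acting on priorities ($G\underline\pi$). Priority derivation step: for a p-goal $a|F$ ($a$ of least priority), clause $c=(h\leftarrow B)$, renaming $\xi$ with $var(a|F)\cap var(c\xi)=\emptyset$, idempotent relevant mgu $\theta$ of $a$ and $h\xi$, and shifting $\underline{\pi}$ with $F$, $B\xi\underline{\pi}$ sharing no priority: $a|F\xrightarrow{c\xi,\theta}(F+B\xi\underline{\pi})\theta$. A p-SLD derivation is a sequence of such steps with each renamed clause $c_j\xi_j$ variable-disjoint from the initial goal and all earlier renamed clauses; its template is the sequence of applied clauses and $nvar$ of a derivation is the union of the sets $var(c_j\xi_j)$. Lowering: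 for $c=(h\leftarrow B)$, a step $a\lambda\underline{\sigma}|(K\lambda\underline{\sigma}+X)\xrightarrow{c}(X+K\lambda\underline{\sigma}+B\xi''\underline{\theta}'')\alpha''$ is a lowering by $X$ of a step $a|K\xrightarrow{c}(K+B\xi'\underline{\theta}')\alpha'$; it is a congruent lowering by $X$ if some shifting $\underline{\rho}$ has $K\underline{\rho}=K\underline{\sigma}$ and $B\underline{\theta}'\underline{\rho}=B\underline{\theta}''$. Steps are congruent lowerings of each other if each is a congruent lowering of the other. A set $S$ of steps is complete if (i) whenever some step $G\xrightarrow{c}\cdot$ exists, some step $G\xrightarrow{c}\cdot$ lies in $S$, and (ii) $S$ contains every step that is a congruent lowering of each other with a step of $S$. $S$ is specialisation independent if whenever $Ds_1,Ds_2\in S$ and $Ds_2$ is a lowering of $Ds_1$ by $X$, $Ds_2$ is a congruent lowering of $Ds_1$ by $X$. A specialisation independent scheduling rule is a complete specialisation independent set of steps. $G\xrightarrow{S,M}R$ denotes a p-SLD derivation with template $M$ all of whose steps lie in $S$. Sub-templates: for a step $a|(F+G)\xrightarrow{c}Q=((F+G)+B\xi\underline{\pi})\alpha$, $Q/F=F\alpha$, $Q/a=B\xi\underline\pi\alpha$, $c/a=c$, $c/F=$ empty, $c/(a|F)=c$; for $F+G\xrightarrow{c}Q\xrightarrow{K}R$, recursively $(c|K)/F=(c/F)|(K/(Q/F))$. Thus $D/F$ is the subsequence of the template $D$ of clauses applied to p-atoms of $F$ or descending from $F$. *)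

theory Defs
  imports Complex_Main
begin

datatype ('f, 'v) fterm = Var 'v | Fun 'f "('f, 'v) fterm list"

datatype ('p, 'f, 'v) patom = Atom 'p "('f, 'v) fterm list"

type_synonym ('f, 'v) subst = "'v \<Rightarrow> ('f, 'v) fterm"

fun vars_term :: "('f, 'v) fterm \<Rightarrow> 'v set" where
  "vars_term (Var x) = {x}"
| "vars_term (Fun f ts) = (\<Union>t\<in>set ts. vars_term t)"

fun subst_term :: "('f, 'v) fterm \<Rightarrow> ('f, 'v) subst \<Rightarrow> ('f, 'v) fterm" where
  "subst_term (Var x) \<sigma> = \<sigma> x"
| "subst_term (Fun f ts) \<sigma> = Fun f (map (\<lambda>t. subst_term t \<sigma>) ts)"

fun vars_atom :: "('p, 'f, 'v) patom \<Rightarrow> 'v set" where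
  "vars_atom (Atom p ts) = (\<Union>t\<in>set ts. vars_term t)"

fun subst_atom :: "('p, 'f, 'v) patom \<Rightarrow> ('f, 'v) subst \<Rightarrow> ('p, 'f, 'v) patom" where
  "subst_atom (Atom p ts) \<sigma> = Atom p (map (\<lambda>t. subst_term t \<sigma>) ts)"

text \<open>Composition: first apply \<open>\<theta>\<close>, then \<open>\<delta>\<close>.\<close>
definition subst_comp :: "('f, 'v) subst \<Rightarrow> ('f, 'v) subst \<Rightarrow> ('f, 'v) subst" where
  "subst_comp \<theta> \<delta> = (\<lambda>x. subst_term (\<theta> x) \<delta>)"

definition subst_dom :: "('f, 'v) subst \<Rightarrow> 'v set" where
  "subst_dom \<theta> = {x. \<theta> x \<noteq> Var x}"

definition subst_vars :: "('f, 'v) subst \<Rightarrow> 'v set" where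
  "subst_vars \<theta> = subst_dom \<theta> \<union> (\<Union>x\<in>subst_dom \<theta>. vars_term (\<theta> x))"

definition is_renaming :: "('f, 'v) subst \<Rightarrow> bool" where
  "is_renaming \<xi> \<longleftrightarrow> (\<exists>f. bij f \<and> \<xi> = (\<lambda>x. Var (f x)))"

definition is_unifier :: "('f, 'v) subst \<Rightarrow> ('p, 'f, 'v) patom \<Rightarrow> ('p, 'f, 'v) patom \<Rightarrow> bool" where
  "is_unifier \<theta> a b \<longleftrightarrow> subst_atom a \<theta> = subst_atom b \<theta>"

definition is_mgu :: "('f, 'v) subst \<Rightarrow> ('p, 'f, 'v) patom \<Rightarrow> ('p, 'f, 'v) patom \<Rightarrow> bool" where
  "is_mgu \<theta> a b \<longleftrightarrow> is_unifier \<theta> a b \<and>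
     (\<forall>\<sigma>. is_unifier \<sigma> a b \<longrightarrow> (\<exists>\<delta>. \<sigma> = subst_comp \<theta> \<delta>))"

definition is_irmgu :: "('f, 'v) subst \<Rightarrow> ('p, 'f, 'v) patom \<Rightarrow> ('p, 'f, 'v) patom \<Rightarrow> bool" where
  "is_irmgu \<theta> a b \<longleftrightarrow> is_mgu \<theta> a b \<and> subst_comp \<theta> \<theta> = \<theta> \<and>
     subst_vars \<theta> \<subseteq> vars_atom a \<union> vars_atom b"

text \<open>A p-goal is a finite set of p-atoms with pairwise distinct priorities; it is
  represented as a finite partial map from priorities to atoms.\<close>
type_synonym ('p, 'f, 'v) pgoal = "rat \<rightharpoonup> ('p, 'f, 'v) patom"

definition is_pgoal :: "('p, 'f, 'v) pgoal \<Rightarrow> bool" where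
  "is_pgoal G \<longleftrightarrow> finite (dom G)"

definition vars_goal :: "('p, 'f, 'v) pgoal \<Rightarrow> 'v set" where
  "vars_goal G = (\<Union>a\<in>ran G. vars_atom a)"

definition subst_goal :: "('p, 'f, 'v) pgoal \<Rightarrow> ('f, 'v) subst \<Rightarrow> ('p, 'f, 'v) pgoal" where
  "subst_goal G \<theta> = (\<lambda>q. map_option (\<lambda>a. subst_atom a \<theta>) (G q))"

definition is_shifting :: "(rat \<Rightarrow> rat) \<Rightarrow> bool" where
  "is_shifting \<pi> \<longleftrightarrow> strict_mono \<pi> \<and> bij \<pi>"

text \<open>\<open>G\<pi>\<close>: the p-atom \<open>a[p]\<close> becomes \<open>a[\<pi> p]\<close>.\<close>
definition shift_goal :: "('p, 'f, 'v) pgoal \<Rightarrow> (rat \<Rightarrow> rat) \<Rightarrow> ('p, 'f, 'v) pgoal" where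
  "shift_goal G \<pi> = (\<lambda>q. G (inv \<pi> q))"

text \<open>\<open>F + G\<close> (only used when the priorities are disjoint).\<close>
definition goal_plus :: "('p, 'f, 'v) pgoal \<Rightarrow> ('p, 'f, 'v) pgoal \<Rightarrow> ('p, 'f, 'v) pgoal" where
  "goal_plus F G = F ++ G"

definition plus_defined :: "('p, 'f, 'v) pgoal \<Rightarrow> ('p, 'f, 'v) pgoal \<Rightarrow> bool" where
  "plus_defined F G \<longleftrightarrow> dom F \<inter> dom G = {}"

type_synonym ('p, 'f, 'v) clause = "('p, 'f, 'v) patom \<times> ('p, 'f, 'v) pgoal"

definition vars_clause :: "('p, 'f, 'v) clause \<Rightarrow> 'v set" where
  "vars_clause c = vars_atom (fst c) \<union> vars_goal (snd c)"

definition subst_clause :: "('p, 'f, 'v) clause \<Rightarrow> ('f, 'v) subst \<Rightarrow> ('p, 'f, 'v) clause" where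
  "subst_clause c \<xi> = (subst_atom (fst c) \<xi>, subst_goal (snd c) \<xi>)"

text \<open>A step \<open>a|F \<rightarrow>(c\<xi>,\<theta>) (F + B\<xi>\<pi>)\<theta>\<close> is recorded by its goal, the clause \<open>c\<close>,
  the renaming \<open>\<xi>\<close>, the mgu \<open>\<theta>\<close> and the shifting \<open>\<pi>\<close>.\<close>
record ('p, 'f, 'v) pstep =
  sgoal :: "('p, 'f, 'v) pgoal"
  sclause :: "('p, 'f, 'v) clause"
  sren :: "('f, 'v) subst"
  smgu :: "('f, 'v) subst"
  sshift :: "rat \<Rightarrow> rat"

definition sel_prio :: "('p, 'f, 'v) pgoal \<Rightarrow> rat" where
  "sel_prio G = Min (dom G)"

definition sel_atom :: "('p, 'f, 'v) pgoal \<Rightarrow> ('p, 'f, 'v) patom" where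
  "sel_atom G = the (G (sel_prio G))"

definition goal_rest :: "('p, 'f, 'v) pgoal \<Rightarrow> ('p, 'f, 'v) pgoal" where
  "goal_rest G = G(sel_prio G := None)"

definition rclause :: "('p, 'f, 'v, 'x) pstep_scheme \<Rightarrow> ('p, 'f, 'v) clause" where
  "rclause s = subst_clause (sclause s) (sren s)"

definition is_step :: "('p, 'f, 'v) pstep \<Rightarrow> bool" where
  "is_step s \<longleftrightarrow>
     is_pgoal (sgoal s) \<and> dom (sgoal s) \<noteq> {} \<and> is_pgoal (snd (sclause s)) \<and>
     is_renaming (sren s) \<and>
     vars_goal (sgoal s) \<inter> vars_clause (rclause s) = {} \<and>
     is_irmgu (smgu s) (sel_atom (sgoal s)) (fst (rclause s)) \<and>
     is_shifting (sshift s) \<and>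
     plus_defined (goal_rest (sgoal s)) (shift_goal (snd (rclause s)) (sshift s))"

definition sresult :: "('p, 'f, 'v) pstep \<Rightarrow> ('p, 'f, 'v) pgoal" where
  "sresult s = subst_goal
     (goal_plus (goal_rest (sgoal s)) (shift_goal (snd (rclause s)) (sshift s))) (smgu s)"

definition is_deriv :: "('p, 'f, 'v) pgoal \<Rightarrow> ('p, 'f, 'v) pstep list \<Rightarrow> bool" where
  "is_deriv G0 ds \<longleftrightarrow> is_pgoal G0 \<and>
     (\<forall>i<length ds. is_step (ds ! i)) \<and>
     (ds \<noteq> [] \<longrightarrow> sgoal (ds ! 0) = G0) \<and>
     (\<forall>i. Suc i < length ds \<longrightarrow> sgoal (ds ! Suc i) = sresult (ds ! i)) \<and>
     (\<forall>j<length ds. vars_clause (rclause (ds ! j)) \<inter> vars_goal G0 = {} \<and>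
        (\<forall>i<j. vars_clause (rclause (ds ! j)) \<inter> vars_clause (rclause (ds ! i)) = {}))"

definition template :: "('p, 'f, 'v) pstep list \<Rightarrow> ('p, 'f, 'v) clause list" where
  "template ds = map sclause ds"

definition nvar :: "('p, 'f, 'v) pstep list \<Rightarrow> 'v set" where
  "nvar ds = (\<Union>s\<in>set ds. vars_clause (rclause s))"

text \<open>\<open>G \<rightarrow>(S,M) \<cdot>\<close>: a derivation with template \<open>M\<close> all of whose steps lie in \<open>S\<close>.\<close>
definition deriv_via :: "('p, 'f, 'v) pstep set \<Rightarrow> ('p, 'f, 'v) pgoal \<Rightarrow>
    ('p, 'f, 'v) clause list \<Rightarrow> ('p, 'f, 'v) pstep list \<Rightarrow> bool" where
  "deriv_via S G M ds \<longleftrightarrow> is_deriv G ds \<and> set ds \<subseteq> S \<and> template ds = M"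

text \<open>Since priorities within a goal are pairwise distinct,
  a sub-p-goal \<open>F\<close> of the current goal (and its descendants) is tracked by its set
  of priorities \<open>P\<close>: if the selected p-atom belongs to \<open>F\<close>, the clause is recorded and
  the descendants are \<open>F\<close> without the selected atom plus the shifted body \<open>B\<xi>\<pi>\<close>;
  otherwise nothing is recorded and the descendants are \<open>F\<alpha>\<close>.\<close>
fun subtempl :: "('p, 'f, 'v) pstep list \<Rightarrow> rat set \<Rightarrow> ('p, 'f, 'v) clause list" where
  "subtempl [] P = []"
| "subtempl (s # ds) P =
     (if sel_prio (sgoal s) \<in> P
      then sclause s # subtempl ds ((P - {sel_prio (sgoal s)}) \<union> sshift s ` dom (snd (sclause s)))
      else subtempl ds P)"

text \<open>\<open>s2\<close> is a lowering by \<open>X\<close> of \<open>s1\<close>, witnessed by the substitution \<open>lam\<close> and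
  shifting \<open>\<sigma>\<close>: \<open>s1 = (a|K \<rightarrow>c \<dots>)\<close>, \<open>s2 = (a\<lambda>\<sigma> | (K\<lambda>\<sigma> + X) \<rightarrow>c \<dots>)\<close>.\<close>
definition lowering_wit :: "('p, 'f, 'v) pstep \<Rightarrow> ('p, 'f, 'v) pstep \<Rightarrow> ('p, 'f, 'v) pgoal \<Rightarrow>
    ('f, 'v) subst \<Rightarrow> (rat \<Rightarrow> rat) \<Rightarrow> bool" where
  "lowering_wit s1 s2 X lam \<sigma> \<longleftrightarrow>
     is_step s1 \<and> is_step s2 \<and> sclause s2 = sclause s1 \<and> is_shifting \<sigma> \<and>
     plus_defined (shift_goal (subst_goal (sgoal s1) lam) \<sigma>) X \<and>
     sgoal s2 = goal_plus (shift_goal (subst_goal (sgoal s1) lam) \<sigma>) X \<and>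
     sel_prio (sgoal s2) = \<sigma> (sel_prio (sgoal s1))"

definition is_lowering :: "('p, 'f, 'v) pstep \<Rightarrow> ('p, 'f, 'v) pstep \<Rightarrow> ('p, 'f, 'v) pgoal \<Rightarrow> bool" where
  "is_lowering s1 s2 X \<longleftrightarrow> (\<exists>lam \<sigma>. lowering_wit s1 s2 X lam \<sigma>)"

definition is_cong_lowering :: "('p, 'f, 'v) pstep \<Rightarrow> ('p, 'f, 'v) pstep \<Rightarrow> ('p, 'f, 'v) pgoal \<Rightarrow> bool" where
  "is_cong_lowering s1 s2 X \<longleftrightarrow> (\<exists>lam \<sigma>. lowering_wit s1 s2 X lam \<sigma> \<and>
     (\<exists>\<rho>. is_shifting \<rho> \<and>
        shift_goal (goal_rest (sgoal s1)) \<rho> = shift_goal (goal_rest (sgoal s1)) \<sigma> \<and>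
        shift_goal (shift_goal (snd (sclause s1)) (sshift s1)) \<rho>
          = shift_goal (snd (sclause s1)) (sshift s2)))"

definition mutual_cong_lowering :: "('p, 'f, 'v) pstep \<Rightarrow> ('p, 'f, 'v) pstep \<Rightarrow> bool" where
  "mutual_cong_lowering s1 s2 \<longleftrightarrow> (\<exists>X. is_cong_lowering s1 s2 X) \<and> (\<exists>X. is_cong_lowering s2 s1 X)"

definition complete_steps :: "('p, 'f, 'v) pstep set \<Rightarrow> bool" where
  "complete_steps S \<longleftrightarrow> (\<forall>s\<in>S. is_step s) \<and>
     (\<forall>G c. (\<exists>s. is_step s \<and> sgoal s = G \<and> sclause s = c) \<longrightarrow>
            (\<exists>s\<in>S. sgoal s = G \<and> sclause s = c)) \<and>
     (\<forall>s\<in>S. \<forall>s'. is_step s' \<and> mutual_cong_lowering s s' \<longrightarrow> s' \<in> S)"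

definition spec_independent :: "('p, 'f, 'v) pstep set \<Rightarrow> bool" where
  "spec_independent S \<longleftrightarrow> (\<forall>s1\<in>S. \<forall>s2\<in>S. \<forall>X. is_lowering s1 s2 X \<longrightarrow> is_cong_lowering s1 s2 X)"

definition si_scheduling_rule :: "('p, 'f, 'v) pstep set \<Rightarrow> bool" where
  "si_scheduling_rule S \<longleftrightarrow> complete_steps S \<and> spec_independent S"

end

theory Submission
  imports Defs
begin


lemma subst_term_comp: "subst_term (subst_term t \<sigma>) \<tau> = subst_term t (subst_comp \<sigma> \<tau>)"
  by (induction t) (auto simp: subst_comp_def)

lemma subst_comp_assoc: "subst_comp (subst_comp a b) c = subst_comp a (subst_comp b c)"
  by (auto simp: subst_comp_def subst_term_comp)

lemma subst_term_Var[simp]: "subst_term t Var = t"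
  by (induction t) (auto simp: map_idI)

lemma subst_term_cong: "(\<And>x. x \<in> vars_term t \<Longrightarrow> \<sigma> x = \<tau> x) \<Longrightarrow> subst_term t \<sigma> = subst_term t \<tau>"
  by (induction t) auto

lemma vars_subst_term: "vars_term (subst_term t \<sigma>) = (\<Union>x\<in>vars_term t. vars_term (\<sigma> x))"
  by (induction t) auto

lemma finite_vars_term[simp]: "finite (vars_term t)"
  by (induction t) auto

lemma subst_term_fix: "subst_term t \<theta> = t \<Longrightarrow> x \<in> vars_term t \<Longrightarrow> \<theta> x = Var x"
proof (induction t)
  case (Var y) then show ?case by simp
next
  case (Fun f ts)
  then obtain ti where "ti \<in> set ts" "x \<in> vars_term ti" by auto
  moreover from Fun.prems(1) have "map (\<lambda>t. subst_term t \<theta>) ts = ts" by simp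
  then have "\<forall>t\<in>set ts. subst_term t \<theta> = t" by (metis map_eq_conv map_ident) 
  ultimately show ?case using Fun.IH by blast
qed

lemma vars_term_subst_sub: "vars_term (subst_term t \<theta>) \<subseteq> vars_term t \<union> subst_vars \<theta>"
proof -
  have "vars_term (\<theta> x) \<subseteq> vars_term t \<union> subst_vars \<theta>" if "x \<in> vars_term t" for x
  proof (cases "\<theta> x = Var x")
    case True then show ?thesis using that by auto
  next
    case False then show ?thesis by (auto simp: subst_vars_def subst_dom_def)
  qed
  then show ?thesis by (auto simp: vars_subst_term)
qed

fun tsize :: "('f, 'v) fterm \<Rightarrow> nat" where
  "tsize (Var x) = 1"
| "tsize (Fun f ts) = 1 + sum_list (map tsize ts)"

lemma tsize_pos: "tsize t > 0" by (cases t) auto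

lemma occurs_size: "x \<in> vars_term t \<Longrightarrow> t \<noteq> Var x \<Longrightarrow> tsize (subst_term t u) > tsize (u x)"
proof (induction t)
  case (Var y) then show ?case by simp
next
  case (Fun f ts)
  then obtain ti where ti: "ti \<in> set ts" "x \<in> vars_term ti" by auto
  have "tsize (u x) \<le> tsize (subst_term ti u)"
  proof (cases "ti = Var x")
    case True then show ?thesis by simp
  next
    case False then show ?thesis using Fun.IH ti by fastforce
  qed
  also have "\<dots> \<le> sum_list (map tsize (map (\<lambda>t. subst_term t u) ts))"
    using ti by (intro member_le_sum_list) auto
  finally show ?case by simp
qed

type_synonym ('f, 'v) eqs = "(('f, 'v) fterm \<times> ('f, 'v) fterm) list"

definition unif :: "('f, 'v) subst \<Rightarrow> ('f, 'v) eqs \<Rightarrow> bool" where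
  "unif \<sigma> E \<longleftrightarrow> (\<forall>(s, t)\<in>set E. subst_term s \<sigma> = subst_term t \<sigma>)"

definition varsE :: "('f, 'v) eqs \<Rightarrow> 'v set" where
  "varsE E = (\<Union>(s, t)\<in>set E. vars_term s \<union> vars_term t)"

definition sizeE :: "('f, 'v) eqs \<Rightarrow> nat" where
  "sizeE E = sum_list (map (\<lambda>(s, t). tsize s + tsize t) E)"

definition idem :: "('f, 'v) subst \<Rightarrow> bool" where
  "idem \<theta> \<longleftrightarrow> (\<forall>y. \<forall>z\<in>vars_term (\<theta> y). \<theta> z = Var z)"

definition mguE :: "('f, 'v) subst \<Rightarrow> ('f, 'v) eqs \<Rightarrow> bool" where
  "mguE \<theta> E \<longleftrightarrow> unif \<theta> E \<and> (\<forall>u. unif u E \<longrightarrow> (\<exists>\<delta>. u = subst_comp \<theta> \<delta>)) \<and> idem \<theta> \<and>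
     subst_vars \<theta> \<subseteq> varsE E"

lemma finite_varsE: "finite (varsE E)"
  by (auto simp: varsE_def)

lemma idem_comp: "idem \<theta> \<Longrightarrow> subst_comp \<theta> \<theta> = \<theta>"
proof
  fix y assume "idem \<theta>"
  then have "subst_term (\<theta> y) \<theta> = subst_term (\<theta> y) Var"
    by (intro subst_term_cong) (auto simp: idem_def)
  then show "subst_comp \<theta> \<theta> y = \<theta> y" by (simp add: subst_comp_def)
qed

lemma mguE_swap: "mguE \<theta> ((a, b) # E) = mguE \<theta> ((b, a) # E)"
  unfolding mguE_def unif_def varsE_def by auto

lemma mguE_nil: "mguE Var []"
  by (auto simp: mguE_def unif_def idem_def subst_vars_def subst_dom_def subst_comp_def varsE_def)

lemma subst_vars_comp: "subst_vars (subst_comp \<sigma> \<theta>) \<subseteq> subst_vars \<sigma> \<union> subst_vars \<theta>"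
proof
  fix z assume "z \<in> subst_vars (subst_comp \<sigma> \<theta>)"
  then obtain y where y: "subst_comp \<sigma> \<theta> y \<noteq> Var y" and z: "z = y \<or> z \<in> vars_term (subst_comp \<sigma> \<theta> y)"
    by (auto simp: subst_vars_def subst_dom_def)
  show "z \<in> subst_vars \<sigma> \<union> subst_vars \<theta>"
  proof (cases "\<sigma> y = Var y")
    case True
    then have "\<theta> y \<noteq> Var y" "subst_comp \<sigma> \<theta> y = \<theta> y" using y by (auto simp: subst_comp_def)
    then show ?thesis using z by (auto simp: subst_vars_def subst_dom_def)
  next
    case False
    have "vars_term (subst_comp \<sigma> \<theta> y) \<subseteq> vars_term (\<sigma> y) \<union> subst_vars \<theta>"
      unfolding subst_comp_def by (rule vars_term_subst_sub)
    moreover have "vars_term (\<sigma> y) \<subseteq> subst_vars \<sigma>" "y \<in> subst_vars \<sigma>"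
      using False by (auto simp: subst_vars_def subst_dom_def)
    ultimately show ?thesis using z by auto
  qed
qed

lemma elim_step:
  fixes E :: "('f, 'v) eqs"
  assumes x: "x \<notin> vars_term t"
    and u: "unif u ((Var x, t) # E)"
    and IH: "\<And>E' :: ('f, 'v) eqs. card (varsE E') < card (varsE ((Var x, t) # E)) \<Longrightarrow>
                  (\<exists>u. unif u E') \<Longrightarrow> \<exists>\<theta>. mguE \<theta> E'"
  shows "\<exists>\<theta>. mguE \<theta> ((Var x, t) # E)"
proof -
  define \<sigma> where "\<sigma> = Var(x := t)"
  define E' where "E' = map (\<lambda>(a, b). (subst_term a \<sigma>, subst_term b \<sigma>)) E"
  have \<sigma>t: "subst_term t \<sigma> = t"
    using x by (metis (mono_tags, lifting) \<sigma>_def fun_upd_other subst_term_Var subst_term_cong)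
  have vs: "vars_term (subst_term a \<sigma>) \<subseteq> (vars_term a - {x}) \<union> vars_term t" for a
    by (auto simp: vars_subst_term \<sigma>_def split: if_splits)
  have vE': "varsE E' \<subseteq> (varsE E - {x}) \<union> vars_term t"
    unfolding E'_def varsE_def using vs by fastforce
  have xE': "x \<notin> varsE E'" using vE' x by auto
  have comp_u: "subst_comp \<sigma> v = v" if "unif v ((Var x, t) # E)" for v
  proof
    fix y from that have "v x = subst_term t v" by (auto simp: unif_def)
    then show "subst_comp \<sigma> v y = v y" by (auto simp: subst_comp_def \<sigma>_def)
  qed
  have unifE': "unif v E'" if "unif v ((Var x, t) # E)" for v
  proof -
    have "subst_term (subst_term a \<sigma>) v = subst_term a v" for a
      by (simp add: subst_term_comp comp_u[OF that])
    then show ?thesis using that by (auto simp: unif_def E'_def)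
  qed
  have "card (varsE E') < card (varsE ((Var x, t) # E))"
  proof (rule psubset_card_mono)
    show "finite (varsE ((Var x, t) # E))" by (rule finite_varsE)
    show "varsE E' \<subset> varsE ((Var x, t) # E)"
      using vE' xE' by (auto simp: varsE_def)
  qed
  then have "\<exists>\<theta>'. mguE \<theta>' E'"
    by (rule IH) (use unifE'[OF u] in blast)
  then obtain \<theta>' where \<theta>': "mguE \<theta>' E'" by blast
  define \<theta> where "\<theta> = subst_comp \<sigma> \<theta>'"
  have "unif \<theta> ((Var x, t) # E)"
  proof -
    have "subst_term (Var x) \<theta> = subst_term t \<theta>"
    proof -
      have "subst_term t \<theta> = subst_term (subst_term t \<sigma>) \<theta>'"
        by (simp add: \<theta>_def subst_term_comp)
      also have "\<dots> = subst_term t \<theta>'" using \<sigma>t by simp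
      finally show ?thesis by (simp add: \<theta>_def subst_comp_def \<sigma>_def)
    qed
    moreover have "subst_term a \<theta> = subst_term b \<theta>" if "(a, b) \<in> set E" for a b
      using \<theta>' that by (force simp: \<theta>_def subst_term_comp[symmetric] mguE_def unif_def E'_def)
    ultimately show ?thesis by (auto simp: unif_def)
  qed
  moreover have "\<exists>\<delta>. v = subst_comp \<theta> \<delta>" if vu: "unif v ((Var x, t) # E)" for v
  proof -
    obtain \<delta> where "v = subst_comp \<theta>' \<delta>" using \<theta>' unifE'[OF vu] by (auto simp: mguE_def)
    then have "v = subst_comp \<sigma> (subst_comp \<theta>' \<delta>)" using comp_u[OF vu] by simp
    then show ?thesis by (auto simp: \<theta>_def subst_comp_assoc)
  qed
  moreover have "idem \<theta>"
    unfolding idem_def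
  proof (intro allI ballI)
    fix y z assume z: "z \<in> vars_term (\<theta> y)"
    then obtain w where w: "w \<in> vars_term (\<sigma> y)" "z \<in> vars_term (\<theta>' w)"
      by (auto simp: \<theta>_def subst_comp_def vars_subst_term)
    have idem': "idem \<theta>'" and sv: "subst_vars \<theta>' \<subseteq> varsE E'" using \<theta>' by (auto simp: mguE_def)
    have "\<theta>' z = Var z" using idem' w(2) by (auto simp: idem_def)
    moreover have "z \<noteq> x"
    proof
      assume zx: "z = x"
      show False
      proof (cases "\<theta>' w = Var w")
        case True
        then have "w = x" using w(2) zx by simp
        then show False using w(1) x by (auto simp: \<sigma>_def split: if_splits)
      next
        case False
        then have "z \<in> subst_vars \<theta>'" using w(2) by (auto simp: subst_vars_def subst_dom_def)
        then show False using sv xE' zx by auto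
      qed
    qed
    ultimately show "\<theta> z = Var z" by (simp add: \<theta>_def subst_comp_def \<sigma>_def)
  qed
  moreover have "subst_vars \<theta> \<subseteq> varsE ((Var x, t) # E)"
  proof -
    have "subst_vars \<sigma> \<subseteq> {x} \<union> vars_term t"
      by (auto simp: subst_vars_def subst_dom_def \<sigma>_def split: if_splits)
    moreover have "subst_vars \<theta>' \<subseteq> varsE E'" using \<theta>' by (auto simp: mguE_def)
    moreover have "varsE ((Var x, t) # E) = {x} \<union> vars_term t \<union> varsE E"
      by (auto simp: varsE_def)
    ultimately show ?thesis using subst_vars_comp[of \<sigma> \<theta>'] vE' unfolding \<theta>_def
      by blast
  qed
  ultimately show ?thesis unfolding mguE_def by blast
qed

lemma map_eq_zip: "length ts = length ss \<Longrightarrow>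
  (map f ts = map f ss) = (\<forall>(a, b)\<in>set (zip ts ss). f a = f b)"
  by (induction ts ss rule: list_induct2) auto

lemma varsE_zip: "length ts = length ss \<Longrightarrow>
   varsE (zip ts ss) = (\<Union>t\<in>set ts. vars_term t) \<union> (\<Union>t\<in>set ss. vars_term t)"
  by (induction ts ss rule: list_induct2) (auto simp: varsE_def)

lemma sizeE_zip: "length ts = length ss \<Longrightarrow>
   sizeE (zip ts ss) = sum_list (map tsize ts) + sum_list (map tsize ss)"
  by (induction ts ss rule: list_induct2) (auto simp: sizeE_def)

lemma unify_exists: "unif u E \<Longrightarrow> \<exists>\<theta>. mguE \<theta> E"
proof (induction E arbitrary: u rule: wf_induct[OF wf_measures[of "[\<lambda>E. card (varsE E), sizeE]"]])
  case (1 E)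
  have IH: "\<And>E'. (E', E) \<in> measures [\<lambda>E. card (varsE E), sizeE] \<Longrightarrow> (\<exists>u. unif u E') \<Longrightarrow> \<exists>\<theta>. mguE \<theta> E'"
    using 1(1) by blast
  show ?case
  proof (cases E)
    case Nil then show ?thesis using mguE_nil by blast
  next
    case (Cons p E0)
    obtain a b where p: "p = (a, b)" by fastforce
    have elim: "\<exists>\<theta>. mguE \<theta> ((Var x, t) # E0)"
      if "x \<notin> vars_term t" "unif u ((Var x, t) # E0)"
        "varsE ((Var x, t) # E0) = varsE E" for x t
      using elim_step[OF that(1,2)] IH that(3) by auto
    have uE: "unif u E" by fact
    show ?thesis
    proof (cases "\<exists>x. a = Var x \<or> b = Var x")
      case True
      then obtain x t where xt: "(a = Var x \<and> b = t) \<or> (b = Var x \<and> a = t)" by blast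
      have u': "unif u ((Var x, t) # E0)" using uE xt by (auto simp: Cons p unif_def)
      have vv: "varsE ((Var x, t) # E0) = varsE E" using xt by (auto simp: Cons p varsE_def)
      have sw: "\<exists>\<theta>. mguE \<theta> E" if "\<exists>\<theta>. mguE \<theta> ((Var x, t) # E0)"
        using that xt mguE_swap[of _ "Var x" t E0] by (auto simp: Cons p)
      show ?thesis
      proof (cases "t = Var x")
        case True
        have "(E0, E) \<in> measures [\<lambda>E. card (varsE E), sizeE]"
        proof -
          have "varsE E0 \<subseteq> varsE E" by (auto simp: Cons varsE_def)
          then have "card (varsE E0) \<le> card (varsE E)" by (simp add: card_mono finite_varsE)
          moreover have "sizeE E0 < sizeE E" using tsize_pos[of a] by (auto simp: Cons p sizeE_def)
          ultimately show ?thesis by auto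
        qed
        moreover have "unif u E0" using uE by (auto simp: Cons unif_def)
        ultimately obtain \<theta> where "mguE \<theta> E0" using IH by blast
        then have "mguE \<theta> ((Var x, t) # E0)"
          using True by (auto simp: mguE_def unif_def varsE_def)
        then show ?thesis using sw by blast
      next
        case False
        show ?thesis
        proof (cases "x \<in> vars_term t")
          case True
          have "tsize (subst_term t u) > tsize (u x)" using occurs_size[OF True False] .
          moreover have "u x = subst_term t u" using u' by (auto simp: unif_def)
          ultimately show ?thesis by simp
        next
          case False
          then show ?thesis using elim[OF False u' vv] sw by blast
        qed
      qed
    next
      case False
      then obtain f ts g ss where ab: "a = Fun f ts" "b = Fun g ss"
        by (metis fterm.exhaust)
      have eq: "map (\<lambda>t. subst_term t u) ts = map (\<lambda>t. subst_term t u) ss" "f = g"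
        using uE by (auto simp: Cons p ab unif_def)
      then have len: "length ts = length ss" by (metis length_map)
      define E' where "E' = zip ts ss @ E0"
      have "unif u E'" using uE eq(1) map_eq_zip[OF len, of "\<lambda>t. subst_term t u"]
        by (auto simp: E'_def Cons p ab unif_def)
      moreover have "(E', E) \<in> measures [\<lambda>E. card (varsE E), sizeE]"
      proof -
        have "varsE E' = varsE E" using varsE_zip[OF len]
          by (auto simp: E'_def Cons p ab varsE_def)
        moreover have "sizeE E' < sizeE E" using sizeE_zip[OF len]
          by (auto simp: E'_def Cons p ab sizeE_def)
        ultimately show ?thesis by auto
      qed
      ultimately obtain \<theta> where \<theta>: "mguE \<theta> E'" using IH by blast
      have uu: "unif v E' = unif v E" for v
        using map_eq_zip[OF len, of "\<lambda>t. subst_term t v"] eq(2)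
        by (auto simp: E'_def Cons p ab unif_def)
      have "varsE E' = varsE E" using varsE_zip[OF len]
        by (auto simp: E'_def Cons p ab varsE_def)
      then have "mguE \<theta> E" using \<theta> uu by (simp add: mguE_def)
      then show ?thesis by blast
    qed
  qed
qed



lemma irmgu_exists:
  assumes "is_unifier u a b"
  shows "\<exists>\<theta>. is_irmgu \<theta> a b"
proof -
  obtain p ts where a: "a = Atom p ts" by (cases a)
  obtain q ss where b: "b = Atom q ss" by (cases b)
  have pq: "p = q" and m: "map (\<lambda>t. subst_term t u) ts = map (\<lambda>t. subst_term t u) ss"
    using assms by (auto simp: is_unifier_def a b)
  then have len: "length ts = length ss" by (metis length_map)
  have ue: "is_unifier v a b = unif v (zip ts ss)" for v
    using map_eq_zip[OF len, of "\<lambda>t. subst_term t v"] by (auto simp: is_unifier_def a b pq unif_def)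
  obtain \<theta> where \<theta>: "mguE \<theta> (zip ts ss)"
    using unify_exists[of u "zip ts ss"] m ue assms by blast
  have "is_irmgu \<theta> a b"
    using \<theta> idem_comp varsE_zip[OF len] unfolding is_irmgu_def is_mgu_def mguE_def ue
    by (auto simp: a b)
  then show ?thesis by blast
qed

section \<open>Atoms and goals\<close>

lemma subst_atom_comp: "subst_atom (subst_atom a \<sigma>) \<tau> = subst_atom a (subst_comp \<sigma> \<tau>)"
  by (cases a) (auto simp: subst_term_comp)

lemma subst_atom_cong: "(\<And>x. x \<in> vars_atom a \<Longrightarrow> \<sigma> x = \<tau> x) \<Longrightarrow> subst_atom a \<sigma> = subst_atom a \<tau>"
  by (cases a) (auto intro: subst_term_cong)

lemma subst_atom_Var[simp]: "subst_atom a Var = a"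
  by (cases a) (auto simp: map_idI)

lemma finite_vars_atom[simp]: "finite (vars_atom a)"
  by (cases a) auto

lemma vars_atom_subst_sub: "vars_atom (subst_atom a \<theta>) \<subseteq> vars_atom a \<union> subst_vars \<theta>"
  by (cases a) (use vars_term_subst_sub in force)

lemma vars_atom_ren: "vars_atom (subst_atom a (\<lambda>x. Var (f x))) = f ` vars_atom a"
  by (cases a) (auto simp: vars_subst_term)

lemma ran_subst_goal: "ran (subst_goal G \<theta>) = (\<lambda>a. subst_atom a \<theta>) ` ran G"
  by (auto simp: ran_def subst_goal_def)

lemma dom_subst_goal[simp]: "dom (subst_goal G \<theta>) = dom G"
  by (auto simp: subst_goal_def)

lemma subst_goal_comp: "subst_goal (subst_goal G \<sigma>) \<tau> = subst_goal G (subst_comp \<sigma> \<tau>)"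
  by (auto simp: subst_goal_def subst_atom_comp option.map_comp o_def)

lemma subst_goal_Var[simp]: "subst_goal G Var = G"
  by (auto simp: subst_goal_def option.map_ident)

lemma shift_goal_id[simp]: "shift_goal G id = G"
  by (auto simp: shift_goal_def inv_id)

lemma subst_shift: "subst_goal (shift_goal G \<pi>) \<theta> = shift_goal (subst_goal G \<theta>) \<pi>"
  by (auto simp: subst_goal_def shift_goal_def)

lemma subst_goal_add: "subst_goal (A ++ B) \<theta> = subst_goal A \<theta> ++ subst_goal B \<theta>"
  by (auto simp: subst_goal_def map_add_def split: option.splits)

lemma shift_goal_add: "shift_goal (A ++ B) \<theta> = shift_goal A \<theta> ++ shift_goal B \<theta>"
  by (auto simp: shift_goal_def map_add_def split: option.splits)

lemma subst_goal_upd: "subst_goal (G(q := None)) \<theta> = (subst_goal G \<theta>)(q := None)"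
  by (auto simp: subst_goal_def)

lemma subst_goal_cong: "(\<And>x. x \<in> vars_goal G \<Longrightarrow> \<sigma> x = \<tau> x) \<Longrightarrow> subst_goal G \<sigma> = subst_goal G \<tau>"
proof
  fix r assume h: "\<And>x. x \<in> vars_goal G \<Longrightarrow> \<sigma> x = \<tau> x"
  show "subst_goal G \<sigma> r = subst_goal G \<tau> r"
  proof (cases "G r")
    case None then show ?thesis by (simp add: subst_goal_def)
  next
    case (Some a)
    then have "a \<in> ran G" by (auto simp: ran_def)
    then have "subst_atom a \<sigma> = subst_atom a \<tau>"
      using h by (intro subst_atom_cong) (auto simp: vars_goal_def)
    then show ?thesis using Some by (simp add: subst_goal_def)
  qed
qed

lemma vars_goal_subst_sub: "vars_goal (subst_goal G \<theta>) \<subseteq> vars_goal G \<union> subst_vars \<theta>"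
  using vars_atom_subst_sub by (fastforce simp: vars_goal_def ran_subst_goal)

lemma vars_goal_ren: "vars_goal (subst_goal G (\<lambda>x. Var (f x))) = f ` vars_goal G"
  by (auto simp: vars_goal_def ran_subst_goal vars_atom_ren)

lemma vars_goal_add: "vars_goal (A ++ B) \<subseteq> vars_goal A \<union> vars_goal B"
  by (auto simp: vars_goal_def ran_def map_add_def split: option.splits)

lemma vars_goal_upd: "vars_goal (G(q := None)) \<subseteq> vars_goal G"
  by (auto simp: vars_goal_def ran_def)

lemma ran_shift: "bij \<pi> \<Longrightarrow> ran (shift_goal G \<pi>) = ran G"
proof
  assume b: "bij \<pi>"
  show "ran (shift_goal G \<pi>) \<subseteq> ran G" by (auto simp: ran_def shift_goal_def)
  show "ran G \<subseteq> ran (shift_goal G \<pi>)"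
  proof
    fix a assume "a \<in> ran G"
    then obtain r where "G r = Some a" by (auto simp: ran_def)
    then have "shift_goal G \<pi> (\<pi> r) = Some a"
      using b by (simp add: shift_goal_def bij_is_inj)
    then show "a \<in> ran (shift_goal G \<pi>)" by (auto simp: ran_def)
  qed
qed

lemma vars_goal_shift: "bij \<pi> \<Longrightarrow> vars_goal (shift_goal G \<pi>) = vars_goal G"
  unfolding vars_goal_def by (simp add: ran_shift)

lemma finite_vars_goal: "is_pgoal G \<Longrightarrow> finite (vars_goal G)"
  by (auto simp: is_pgoal_def vars_goal_def finite_ran)

lemma dom_shift_goal: "is_shifting \<pi> \<Longrightarrow> dom (shift_goal G \<pi>) = \<pi> ` dom G"
proof
  assume "is_shifting \<pi>"
  then have b: "bij \<pi>" by (simp add: is_shifting_def)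
  show "dom (shift_goal G \<pi>) \<subseteq> \<pi> ` dom G"
  proof
    fix r assume "r \<in> dom (shift_goal G \<pi>)"
    then have "inv \<pi> r \<in> dom G" by (auto simp: shift_goal_def)
    moreover have "r = \<pi> (inv \<pi> r)" using b by (simp add: bij_is_surj surj_f_inv_f)
    ultimately show "r \<in> \<pi> ` dom G" by blast
  qed
  show "\<pi> ` dom G \<subseteq> dom (shift_goal G \<pi>)"
    using b by (auto simp: shift_goal_def bij_is_inj)
qed

lemma dom_shift_goal': "dom (shift_goal G \<pi>) = {r. inv \<pi> r \<in> dom G}"
  by (auto simp: shift_goal_def)

lemma shift_goal_upd: "bij \<sigma> \<Longrightarrow> (shift_goal G \<sigma>)(\<sigma> q := None) = shift_goal (G(q := None)) \<sigma>"
  unfolding shift_goal_def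
  by (rule ext) (auto simp: bij_inv_eq_iff bij_is_inj)

lemma vars_sel_atom: "dom G \<noteq> {} \<Longrightarrow> is_pgoal G \<Longrightarrow> vars_atom (sel_atom G) \<subseteq> vars_goal G"
proof -
  assume "dom G \<noteq> {}" "is_pgoal G"
  then have "sel_prio G \<in> dom G" unfolding sel_prio_def is_pgoal_def by (rule Min_in[rotated])
  then have "sel_atom G \<in> ran G" by (auto simp: sel_atom_def ran_def)
  then show ?thesis by (auto simp: vars_goal_def)
qed

lemma shifting_inv: "is_shifting \<sigma> \<Longrightarrow> is_shifting (inv \<sigma>)"
  unfolding is_shifting_def
proof (intro conjI)
  assume a: "strict_mono \<sigma> \<and> bij \<sigma>"
  show "bij (inv \<sigma>)" using a by (simp add: bij_imp_bij_inv)
  show "strict_mono (inv \<sigma>)"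
    by (rule strict_mono_inv[of \<sigma>]) (use a in \<open>auto simp: bij_is_surj bij_is_inj\<close>)
qed

lemma shifting_comp: "is_shifting \<sigma> \<Longrightarrow> is_shifting \<pi> \<Longrightarrow> is_shifting (\<sigma> \<circ> \<pi>)"
  unfolding is_shifting_def strict_mono_def by (auto simp: bij_comp)

lemma shifting_id: "is_shifting id"
  by (auto simp: is_shifting_def strict_mono_def)

lemma fresh_bij:
  assumes "infinite (UNIV :: 'v set)" "finite (C :: 'v set)" "finite (W :: 'v set)"
  shows "\<exists>f. bij f \<and> f ` C \<inter> W = {}"
proof -
  have "infinite (UNIV - (W \<union> C))" using assms by auto
  then obtain C' where C': "finite C'" "card C' = card C" "C' \<subseteq> UNIV - (W \<union> C)"
    using infinite_arbitrarily_large by blast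
  then obtain g where g: "bij_betw g C C'" using finite_same_card_bij assms(2) by metis
  define f where "f x = (if x \<in> C then g x else if x \<in> C' then inv_into C g x else x)" for x
  have ff: "f (f x) = x" for x
  proof -
    consider "x \<in> C" | "x \<in> C'" | "x \<notin> C" "x \<notin> C'" by blast
    then show ?thesis
    proof cases
      case 1
      then have "g x \<in> C'" "g x \<notin> C" using g C' by (auto simp: bij_betw_def)
      then show ?thesis using 1 g by (simp add: f_def bij_betw_def)
    next
      case 2
      then have "inv_into C g x \<in> C" using g by (simp add: bij_betw_def inv_into_into)
      moreover have "g (inv_into C g x) = x" using 2 g by (meson bij_betw_inv_into_right)
      ultimately show ?thesis using 2 C' by (auto simp: f_def)
    next
      case 3 then show ?thesis by (simp add: f_def)
    qed
  qed
  then have "bij f" by (intro o_bij[of f f]) (auto simp: fun_eq_iff)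
  moreover have "f ` C \<inter> W = {}" using g C' by (auto simp: f_def bij_betw_def)
  ultimately show ?thesis by blast
qed



lemma sel_lift:
  assumes sh: "is_shifting \<sigma>" and pg: "is_pgoal Gk" and fin: "finite (dom H)"
    and H: "H = goal_plus (shift_goal (subst_goal Gk lam) \<sigma>) Xk"
    and ne: "dom H \<noteq> {}" and pin: "sel_prio H \<notin> dom Xk"
  shows "dom Gk \<noteq> {} \<and> sel_prio H = \<sigma> (sel_prio Gk) \<and> sel_atom H = subst_atom (sel_atom Gk) lam"
proof -
  define A where "A = shift_goal (subst_goal Gk lam) \<sigma>"
  define p where "p = sel_prio H"
  have pH: "p \<in> dom H" unfolding p_def sel_prio_def using fin ne by (rule Min_in)
  have dH: "dom H = dom A \<union> dom Xk" by (auto simp: H A_def goal_plus_def)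
  have dA: "dom A = \<sigma> ` dom Gk" using sh by (simp add: A_def dom_shift_goal)
  obtain r where r: "r \<in> dom Gk" "p = \<sigma> r" using pH pin dH dA p_def by auto
  have finG: "finite (dom Gk)" using pg by (simp add: is_pgoal_def)
  define q where "q = sel_prio Gk"
  have qG: "q \<in> dom Gk" unfolding q_def sel_prio_def using finG r(1) by (intro Min_in) auto
  have "q \<le> r" unfolding q_def sel_prio_def using finG r(1) by (rule Min_le)
  then have "\<sigma> q \<le> \<sigma> r" using sh by (simp add: is_shifting_def strict_mono_less_eq)
  moreover have "p \<le> \<sigma> q" unfolding p_def sel_prio_def using fin dH dA qG by (intro Min_le) auto
  ultimately have pq: "p = \<sigma> q" using r by simp
  obtain a where a: "Gk q = Some a" using qG by auto
  have inj: "inj \<sigma>" using sh by (simp add: is_shifting_def bij_is_inj)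
  have "Xk p = None" using pin p_def by auto
  then have "H p = A p" by (simp add: H A_def goal_plus_def map_add_def)
  also have "A p = Some (subst_atom a lam)"
    using a inj by (simp add: A_def pq shift_goal_def subst_goal_def)
  finally have "sel_atom H = subst_atom a lam" by (simp add: sel_atom_def p_def)
  moreover have "sel_atom Gk = a" using a by (simp add: sel_atom_def q_def)
  ultimately show ?thesis using qG pq p_def q_def by auto
qed


lemma mu_ren:
  assumes "bij f" and "\<mu> = (\<lambda>x. if x \<in> f ` C then \<xi> (inv f x) else lam x)"
  shows mu_atom_ren: "vars_atom a \<subseteq> C \<Longrightarrow> subst_atom (subst_atom a (\<lambda>x. Var (f x))) \<mu> = subst_atom a \<xi>"
    and mu_goal_ren: "vars_goal B \<subseteq> C \<Longrightarrow> subst_goal (subst_goal B (\<lambda>x. Var (f x))) \<mu> = subst_goal B \<xi>"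
    and mu_atom_lam: "vars_atom a \<inter> f ` C = {} \<Longrightarrow> subst_atom a \<mu> = subst_atom a lam"
    and mu_goal_lam: "vars_goal B \<inter> f ` C = {} \<Longrightarrow> subst_goal B \<mu> = subst_goal B lam"
proof -
  have inj: "inj f" using assms(1) by (simp add: bij_is_inj)
  have e: "subst_comp (\<lambda>x. Var (f x)) \<mu> x = \<xi> x" if "x \<in> C" for x
    using that inj by (simp add: subst_comp_def assms(2))
  show "vars_atom a \<subseteq> C \<Longrightarrow> subst_atom (subst_atom a (\<lambda>x. Var (f x))) \<mu> = subst_atom a \<xi>"
    by (simp add: subst_atom_comp) (rule subst_atom_cong, use e in auto)
  show "vars_goal B \<subseteq> C \<Longrightarrow> subst_goal (subst_goal B (\<lambda>x. Var (f x))) \<mu> = subst_goal B \<xi>"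
    by (simp add: subst_goal_comp) (rule subst_goal_cong, use e in auto)
  show "vars_atom a \<inter> f ` C = {} \<Longrightarrow> subst_atom a \<mu> = subst_atom a lam"
    by (rule subst_atom_cong) (auto simp: assms(2))
  show "vars_goal B \<inter> f ` C = {} \<Longrightarrow> subst_goal B \<mu> = subst_goal B lam"
    by (rule subst_goal_cong) (auto simp: assms(2))
qed

lemma cong_same:
  assumes "is_step s" "is_step s'" "sgoal s = sgoal s'" "sclause s = sclause s'" "sshift s = sshift s'"
  shows "is_cong_lowering s s' Map.empty"
  unfolding is_cong_lowering_def lowering_wit_def
  apply (rule exI[of _ Var], rule exI[of _ id])
  using assms shifting_id by (auto simp: plus_defined_def goal_plus_def intro!: exI[of _ id])

lemma vars_clause_ren: "vars_clause (subst_clause c (\<lambda>x. Var (f x))) = f ` vars_clause c"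
  by (auto simp: vars_clause_def subst_clause_def vars_atom_ren vars_goal_ren)

lemma finite_vars_clause: "is_pgoal (snd c) \<Longrightarrow> finite (vars_clause c)"
  by (simp add: vars_clause_def finite_vars_goal)

lemma upd_add_left: "p \<notin> dom Y \<Longrightarrow> (X ++ Y)(p := None) = X(p := None) ++ Y"
  by (rule ext) (auto simp: map_add_def split: option.splits)

lemma upd_add_right: "p \<notin> dom X \<Longrightarrow> (X ++ Y)(p := None) = X ++ Y(p := None)"
  by (rule ext) (auto simp: map_add_def split: option.splits)


lemma g_step:
  fixes s :: "('p, 'f, 'v) pstep"
  assumes inf: "infinite (UNIV :: 'v set)" and SR: "si_scheduling_rule S"
    and sS: "s \<in> S" and st: "is_step s" and sg: "sgoal s = H"
    and H: "H = goal_plus (shift_goal (subst_goal Gk lam) \<sigma>) Xk"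
    and pd: "plus_defined (shift_goal (subst_goal Gk lam) \<sigma>) Xk"
    and sh: "is_shifting \<sigma>" and pg: "is_pgoal Gk" and fW: "finite W" and vW: "vars_goal Gk \<subseteq> W"
    and pin: "sel_prio H \<notin> dom Xk"
  shows "\<exists>s1 \<delta> \<rho>. s1 \<in> S \<and> is_step s1 \<and> sgoal s1 = Gk \<and> sclause s1 = sclause s \<and>
     vars_clause (rclause s1) \<inter> W = {} \<and> is_pgoal (sresult s1) \<and>
     vars_goal (sresult s1) \<subseteq> W \<union> vars_clause (rclause s1) \<and> is_shifting \<rho> \<and>
     sresult s = goal_plus (shift_goal (subst_goal (sresult s1) \<delta>) \<rho>) (subst_goal Xk (smgu s)) \<and>
     plus_defined (shift_goal (subst_goal (sresult s1) \<delta>) \<rho>) (subst_goal Xk (smgu s)) \<and>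
     dom (sresult s) - dom (subst_goal Xk (smgu s)) =
       (dom H - dom Xk - {sel_prio H}) \<union> sshift s ` dom (snd (sclause s))"
proof -
  have allS: "\<forall>s\<in>S. is_step s"
    and compl1: "\<And>G c. (\<exists>s. is_step s \<and> sgoal s = G \<and> sclause s = c) \<Longrightarrow> (\<exists>s\<in>S. sgoal s = G \<and> sclause s = c)"
    and compl2: "\<And>s s'. s \<in> S \<Longrightarrow> is_step s' \<Longrightarrow> mutual_cong_lowering s s' \<Longrightarrow> s' \<in> S"
    and si: "spec_independent S"
    using SR unfolding si_scheduling_rule_def complete_steps_def by blast+
  obtain h B where c: "sclause s = (h, B)" by fastforce
  define \<xi> where "\<xi> = sren s"
  define \<theta> where "\<theta> = smgu s"
  define \<pi> where "\<pi> = sshift s"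
  define p where "p = sel_prio H"
  define q where "q = sel_prio Gk"
  have rc: "rclause s = (subst_atom h \<xi>, subst_goal B \<xi>)"
    by (simp add: rclause_def subst_clause_def c \<xi>_def)
  have pgH: "is_pgoal H" and neH: "dom H \<noteq> {}" and pgB: "is_pgoal B"
    and mgu: "is_irmgu \<theta> (sel_atom H) (subst_atom h \<xi>)" and shp: "is_shifting \<pi>"
    and pdH: "plus_defined (goal_rest H) (shift_goal (subst_goal B \<xi>) \<pi>)"
    using st unfolding is_step_def by (auto simp: sg rc c \<theta>_def \<pi>_def)
  define A where "A = shift_goal (subst_goal Gk lam) \<sigma>"
  have sel: "dom Gk \<noteq> {}" "p = \<sigma> q" "sel_atom H = subst_atom (sel_atom Gk) lam"
    using sel_lift[OF sh pg _ H neH pin] pgH by (auto simp: is_pgoal_def p_def q_def)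
  have dH: "dom H = dom A \<union> dom Xk" by (auto simp: H A_def goal_plus_def)
  have dA: "dom A = \<sigma> ` dom Gk" using sh by (simp add: A_def dom_shift_goal)
  have bijs: "bij \<sigma>" using sh by (simp add: is_shifting_def)
  have grH: "goal_rest H = H(p := None)" by (simp add: goal_rest_def p_def)
  have finC: "finite (vars_clause (h, B))" using pgB by (simp add: finite_vars_clause)
  obtain f where f: "bij f" "f ` vars_clause (h, B) \<inter> W = {}"
    using fresh_bij[OF inf finC fW] by blast
  define \<xi>' where "\<xi>' = (\<lambda>x. Var (f x) :: ('f, 'v) fterm)"
  define C' where "C' = f ` vars_clause (h, B)"
  have vC': "vars_clause (subst_clause (h, B) \<xi>') = C'"
    by (simp add: \<xi>'_def C'_def vars_clause_ren)
  have vh: "vars_atom (subst_atom h \<xi>') \<subseteq> C'" and vB: "vars_goal (subst_goal B \<xi>') \<subseteq> C'"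
    using vC' by (auto simp: vars_clause_def subst_clause_def)
  have vsel: "vars_atom (sel_atom Gk) \<subseteq> vars_goal Gk" using vars_sel_atom[OF sel(1) pg] .
  have C'W: "C' \<inter> W = {}" using f by (simp add: C'_def)
  have lift: "is_unifier (subst_comp \<mu> \<theta>) (sel_atom Gk) (subst_atom h \<xi>') \<and>
      subst_goal (goal_rest Gk) \<mu> = subst_goal (goal_rest Gk) lam' \<and>
      subst_goal (subst_goal B \<xi>') \<mu> = subst_goal B \<xi>"
    if "sel_atom H = subst_atom (sel_atom Gk) lam'"
      and "\<mu> = (\<lambda>x. if x \<in> f ` vars_clause (h, B) then \<xi> (inv f x) else lam' x)" for lam' \<mu>
  proof -
    have a1: "subst_atom (sel_atom Gk) \<mu> = subst_atom (sel_atom Gk) lam'"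
      using mu_atom_lam[OF f(1) that(2)] vsel vW C'W C'_def by blast
    have a2: "subst_atom (subst_atom h \<xi>') \<mu> = subst_atom h \<xi>"
      using mu_atom_ren[OF f(1) that(2), of h] \<xi>'_def by (simp add: vars_clause_def)
    have u: "subst_atom (sel_atom H) \<theta> = subst_atom (subst_atom h \<xi>) \<theta>"
      using mgu by (simp add: is_irmgu_def is_mgu_def is_unifier_def)
    have "is_unifier (subst_comp \<mu> \<theta>) (sel_atom Gk) (subst_atom h \<xi>')"
      unfolding is_unifier_def subst_atom_comp[symmetric] a1 a2 using u that(1) by simp
    moreover have "subst_goal (goal_rest Gk) \<mu> = subst_goal (goal_rest Gk) lam'"
    proof -
      have "vars_goal (goal_rest Gk) \<inter> f ` vars_clause (h, B) = {}"
        using vars_goal_upd[of Gk "sel_prio Gk"] vW C'W C'_def by (auto simp: goal_rest_def)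
      then show ?thesis by (rule mu_goal_lam[OF f(1) that(2)])
    qed
    moreover have "subst_goal (subst_goal B \<xi>') \<mu> = subst_goal B \<xi>"
      using mu_goal_ren[OF f(1) that(2), of B] \<xi>'_def by (simp add: vars_clause_def)
    ultimately show ?thesis by blast
  qed
  obtain \<theta>' where \<theta>': "is_irmgu \<theta>' (sel_atom Gk) (subst_atom h \<xi>')"
    using lift[OF sel(3) refl] irmgu_exists by blast
  define \<pi>' where "\<pi>' = inv \<sigma> \<circ> \<pi>"
  have shp': "is_shifting \<pi>'" unfolding \<pi>'_def by (intro shifting_comp shifting_inv sh shp)
  have ren': "is_renaming \<xi>'" using f by (auto simp: is_renaming_def \<xi>'_def)
  have disjC: "vars_goal Gk \<inter> vars_clause (subst_clause (h, B) \<xi>') = {}" using vC' vW C'W by auto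
  have dgr: "dom (goal_rest Gk) = dom Gk - {q}" by (auto simp: goal_rest_def q_def)
  have pdGk: "plus_defined (goal_rest Gk) (shift_goal (subst_goal B \<xi>') \<pi>')"
  proof -
    have "False" if r1: "r \<in> dom Gk" "r \<noteq> q" and r2: "r \<in> \<pi>' ` dom B" for r
    proof -
      obtain b where b: "b \<in> dom B" "r = inv \<sigma> (\<pi> b)" using r2 by (auto simp: \<pi>'_def)
      have "\<sigma> r = \<pi> b" using b bijs by (simp add: bij_is_surj surj_f_inv_f)
      moreover have "\<sigma> r \<in> dom (goal_rest H)"
        using r1 dA dH sel(2) bijs by (auto simp: grH bij_is_inj inj_eq)
      moreover have "\<pi> b \<in> dom (shift_goal (subst_goal B \<xi>) \<pi>)"
        using b shp by (simp add: dom_shift_goal)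
      ultimately show False using pdH by (auto simp: plus_defined_def)
    qed
    then show ?thesis using shp' dgr by (auto simp: plus_defined_def dom_shift_goal)
  qed
  define s0 :: "('p, 'f, 'v) pstep" where
    "s0 = \<lparr>sgoal = Gk, sclause = (h, B), sren = \<xi>', smgu = \<theta>', sshift = \<pi>'\<rparr>"
  have rc0: "rclause s0 = subst_clause (h, B) \<xi>'" by (simp add: s0_def rclause_def)
  have "is_step s0"
    unfolding is_step_def using pg sel(1) pgB ren' disjC \<theta>' shp' pdGk
    by (simp add: s0_def rclause_def subst_clause_def)
  then have "\<exists>s. is_step s \<and> sgoal s = Gk \<and> sclause s = (h, B)"
    by (intro exI[of _ s0]) (simp add: s0_def)
  then obtain s1 where s1: "s1 \<in> S" "sgoal s1 = Gk" "sclause s1 = (h, B)"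
    using compl1[of Gk "(h, B)"] by blast
  have st1: "is_step s1" using s1 allS by blast
  define \<pi>1 where "\<pi>1 = sshift s1"
  define s1' where "s1' = s1\<lparr>sren := \<xi>', smgu := \<theta>'\<rparr>"
  have rc1: "rclause s1' = subst_clause (h, B) \<xi>'" by (simp add: s1'_def rclause_def s1)
  have st1': "is_step s1'"
  proof -
    have "plus_defined (goal_rest Gk) (shift_goal (subst_goal B (sren s1)) \<pi>1)"
      using st1 by (simp add: is_step_def rclause_def subst_clause_def s1 \<pi>1_def)
    then have "plus_defined (goal_rest Gk) (shift_goal (subst_goal B \<xi>') \<pi>1)"
      by (simp add: plus_defined_def dom_shift_goal')
    moreover have "is_shifting \<pi>1" using st1 by (simp add: is_step_def \<pi>1_def)
    ultimately show ?thesis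
      unfolding is_step_def using pg sel(1) pgB ren' disjC \<theta>'
      by (simp add: s1'_def rclause_def subst_clause_def s1 \<pi>1_def)
  qed
  have "mutual_cong_lowering s1 s1'"
    unfolding mutual_cong_lowering_def
    using cong_same[OF st1 st1'] cong_same[OF st1' st1] by (auto simp: s1'_def)
  then have s1'S: "s1' \<in> S" using compl2 s1(1) st1' by blast
  have low: "is_lowering s1' s Xk"
    unfolding is_lowering_def lowering_wit_def
    using st1' st sh pd H sel(2) c
    by (auto simp: s1'_def s1 sg p_def q_def intro!: exI[of _ lam] exI[of _ \<sigma>])
  then have "is_cong_lowering s1' s Xk" using si s1'S sS by (auto simp: spec_independent_def)
  then obtain lam2 \<sigma>2 \<rho> where lw: "lowering_wit s1' s Xk lam2 \<sigma>2" and rho: "is_shifting \<rho>"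
    and rho1: "shift_goal (goal_rest Gk) \<rho> = shift_goal (goal_rest Gk) \<sigma>2"
    and rho2: "shift_goal (shift_goal B \<pi>1) \<rho> = shift_goal B \<pi>"
    unfolding is_cong_lowering_def by (auto simp: s1'_def s1 c \<pi>1_def \<pi>_def)
  define A2 where "A2 = shift_goal (subst_goal Gk lam2) \<sigma>2"
  have sh2: "is_shifting \<sigma>2" and H2: "H = goal_plus A2 Xk" and pd2: "plus_defined A2 Xk"
    using lw by (auto simp: lowering_wit_def A2_def s1'_def s1 sg)
  have sel2: "p = \<sigma>2 q" "sel_atom H = subst_atom (sel_atom Gk) lam2"
    using sel_lift[OF sh2 pg _ H2[unfolded A2_def] neH pin] pgH by (auto simp: is_pgoal_def p_def q_def)
  define \<mu>2 where "\<mu>2 = (\<lambda>x. if x \<in> f ` vars_clause (h, B) then \<xi> (inv f x) else lam2 x)"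
  note L2 = lift[OF sel2(2) \<mu>2_def]
  obtain \<delta> where \<delta>: "subst_comp \<mu>2 \<theta> = subst_comp \<theta>' \<delta>"
    using \<theta>' L2 by (auto simp: is_irmgu_def is_mgu_def)
  define G' where "G' = sresult s1'"
  have G'def: "G' = subst_goal (goal_rest Gk ++ shift_goal (subst_goal B \<xi>') \<pi>1) \<theta>'"
    by (simp add: G'_def sresult_def s1'_def s1 rclause_def subst_clause_def goal_plus_def \<pi>1_def)
  define R2 where "R2 = shift_goal (subst_goal (goal_rest Gk) lam2) \<sigma>2"
  define Bs where "Bs = shift_goal (subst_goal B \<xi>) \<pi>"
  have E: "shift_goal (subst_goal G' \<delta>) \<rho> = subst_goal (R2 ++ Bs) \<theta>"
  proof -
    have "subst_goal G' \<delta> = subst_goal (goal_rest Gk ++ shift_goal (subst_goal B \<xi>') \<pi>1) (subst_comp \<mu>2 \<theta>)"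
      by (simp add: G'def subst_goal_comp \<delta>)
    also have "\<dots> = subst_goal (subst_goal (goal_rest Gk) lam2 ++ shift_goal (subst_goal B \<xi>) \<pi>1) \<theta>"
      using L2 by (simp add: subst_goal_comp[symmetric] subst_goal_add subst_shift)
    finally have "shift_goal (subst_goal G' \<delta>) \<rho> =
       subst_goal (subst_goal (shift_goal (goal_rest Gk) \<rho>) lam2 ++ subst_goal (shift_goal (shift_goal B \<pi>1) \<rho>) \<xi>) \<theta>"
      by (simp only: subst_shift[symmetric] shift_goal_add)
    also have "\<dots> = subst_goal (R2 ++ Bs) \<theta>"
      by (simp add: rho1 rho2 R2_def Bs_def subst_shift)
    finally show ?thesis .
  qed
  have bij2: "bij \<sigma>2" using sh2 by (simp add: is_shifting_def)
  have A2upd: "A2(p := None) = R2"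
    using shift_goal_upd[OF bij2, of "subst_goal Gk lam2" q]
    by (simp add: A2_def R2_def sel2(1) subst_goal_upd goal_rest_def q_def)
  have pXk: "p \<notin> dom Xk" using pin p_def by simp
  have grH2: "goal_rest H = R2 ++ Xk"
    using upd_add_left[OF pXk, of A2] grH H2 A2upd by (simp add: goal_plus_def)
  have dBsXk: "dom Bs \<inter> dom Xk = {}"
    using pdH grH2 by (auto simp: plus_defined_def Bs_def)
  have dR2: "dom R2 = dom A2 - {p}" using A2upd[symmetric] by auto
  have sres: "sresult s = subst_goal (R2 ++ Xk ++ Bs) \<theta>"
    by (simp add: sresult_def sg grH2 rc \<theta>_def goal_plus_def Bs_def \<pi>_def)
  have comm: "Xk ++ Bs = Bs ++ Xk" using dBsXk by (intro map_add_comm) blast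
  have res_eq: "sresult s = goal_plus (shift_goal (subst_goal G' \<delta>) \<rho>) (subst_goal Xk \<theta>)"
  proof -
    have "R2 ++ Xk ++ Bs = (R2 ++ Bs) ++ Xk"
      by (metis map_add_assoc comm)
    then show ?thesis unfolding E sres goal_plus_def subst_goal_add[symmetric] by simp
  qed
  have dE: "dom (shift_goal (subst_goal G' \<delta>) \<rho>) = dom R2 \<union> dom Bs"
    unfolding E by auto
  have dA2: "dom A2 = dom H - dom Xk" using H2 pd2 by (auto simp: goal_plus_def plus_defined_def)
  have pd': "plus_defined (shift_goal (subst_goal G' \<delta>) \<rho>) (subst_goal Xk \<theta>)"
    using dE dR2 dBsXk pd2 by (auto simp: plus_defined_def)
  have dres: "dom (sresult s) - dom (subst_goal Xk \<theta>) = (dom H - dom Xk - {p}) \<union> \<pi> ` dom B"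
  proof -
    have "dom Bs = \<pi> ` dom B" using shp by (simp add: Bs_def dom_shift_goal)
    moreover have "dom (sresult s) = dom (shift_goal (subst_goal G' \<delta>) \<rho>) \<union> dom (subst_goal Xk \<theta>)"
      using res_eq by (auto simp: goal_plus_def)
    moreover have "dom (shift_goal (subst_goal G' \<delta>) \<rho>) \<inter> dom (subst_goal Xk \<theta>) = {}"
      using pd' by (simp add: plus_defined_def)
    moreover have "dom (shift_goal (subst_goal G' \<delta>) \<rho>) = (dom H - dom Xk - {p}) \<union> \<pi> ` dom B"
      using dE dR2 dA2 calculation(1) by simp
    ultimately show ?thesis by (simp add: Un_Diff disjoint_iff) blast
  qed
  have pgG': "is_pgoal G'"
  proof -
    have "dom G' = dom (goal_rest Gk) \<union> \<pi>1 ` dom B"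
      using st1 by (auto simp: G'def dom_shift_goal is_step_def \<pi>1_def)
    moreover have "finite (dom (goal_rest Gk))" using pg by (simp add: is_pgoal_def dgr)
    moreover have "finite (dom B)" using pgB by (simp add: is_pgoal_def)
    ultimately show ?thesis by (simp add: is_pgoal_def)
  qed
  have vG': "vars_goal G' \<subseteq> W \<union> vars_clause (rclause s1')"
  proof -
    have bij1: "bij \<pi>1" using st1 by (simp add: is_step_def is_shifting_def \<pi>1_def)
    have "vars_goal G' \<subseteq> vars_goal (goal_rest Gk ++ shift_goal (subst_goal B \<xi>') \<pi>1) \<union> subst_vars \<theta>'"
      unfolding G'def by (rule vars_goal_subst_sub)
    also have "\<dots> \<subseteq> vars_goal Gk \<union> C' \<union> subst_vars \<theta>'"
      using vars_goal_add[of "goal_rest Gk" "shift_goal (subst_goal B \<xi>') \<pi>1"]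
        vars_goal_upd[of Gk "sel_prio Gk"] vars_goal_shift[OF bij1, of "subst_goal B \<xi>'"] vB
      unfolding goal_rest_def by blast
    finally have "vars_goal G' \<subseteq> vars_goal Gk \<union> C' \<union> subst_vars \<theta>'" .
    moreover have "subst_vars \<theta>' \<subseteq> vars_goal Gk \<union> C'"
      using \<theta>' vsel vh by (auto simp: is_irmgu_def)
    ultimately show ?thesis using vW rc1 vC' by auto
  qed
  show ?thesis
    apply (rule exI[of _ s1'], rule exI[of _ \<delta>], rule exI[of _ \<rho>])
    using s1'S st1' s1 c rc1 vC' C'W pgG' vG' rho res_eq pd' dres
    by (simp add: s1'_def G'_def \<theta>_def p_def \<pi>_def del: dom_subst_goal)
qed



fun chain :: "('p, 'f, 'v) pgoal \<Rightarrow> ('p, 'f, 'v) pstep list \<Rightarrow> bool" where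
  "chain H [] = True"
| "chain H (s # ds) = (is_step s \<and> sgoal s = H \<and> chain (sresult s) ds)"

fun fr :: "'v set \<Rightarrow> ('p, 'f, 'v) pstep list \<Rightarrow> bool" where
  "fr W [] = True"
| "fr W (s # ds) = (vars_clause (rclause s) \<inter> W = {} \<and> fr (W \<union> vars_clause (rclause s)) ds)"

lemma chain_iff: "chain H ds \<longleftrightarrow> (\<forall>i<length ds. is_step (ds ! i)) \<and> (ds \<noteq> [] \<longrightarrow> sgoal (ds ! 0) = H) \<and>
     (\<forall>i. Suc i < length ds \<longrightarrow> sgoal (ds ! Suc i) = sresult (ds ! i))"
proof (induction ds arbitrary: H)
  case Nil then show ?case by simp
next
  case (Cons s ds)
  show ?case
  proof
    assume c: "chain H (s # ds)"
    then have IH: "(\<forall>i<length ds. is_step (ds ! i)) \<and> (ds \<noteq> [] \<longrightarrow> sgoal (ds ! 0) = sresult s) \<and>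
     (\<forall>i. Suc i < length ds \<longrightarrow> sgoal (ds ! Suc i) = sresult (ds ! i))" using Cons by simp
    show "(\<forall>i<length (s # ds). is_step ((s # ds) ! i)) \<and> (s # ds \<noteq> [] \<longrightarrow> sgoal ((s # ds) ! 0) = H) \<and>
     (\<forall>i. Suc i < length (s # ds) \<longrightarrow> sgoal ((s # ds) ! Suc i) = sresult ((s # ds) ! i))"
    proof (intro conjI allI impI)
      fix i assume "i < length (s # ds)" then show "is_step ((s # ds) ! i)"
        using c IH by (cases i) auto
    next
      show "sgoal ((s # ds) ! 0) = H" using c by simp
    next
      fix i assume "Suc i < length (s # ds)" then show "sgoal ((s # ds) ! Suc i) = sresult ((s # ds) ! i)"
        using IH by (cases i) auto
    qed
  next
    assume r: "(\<forall>i<length (s # ds). is_step ((s # ds) ! i)) \<and> (s # ds \<noteq> [] \<longrightarrow> sgoal ((s # ds) ! 0) = H) \<and>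
     (\<forall>i. Suc i < length (s # ds) \<longrightarrow> sgoal ((s # ds) ! Suc i) = sresult ((s # ds) ! i))"
    have "(\<forall>i<length ds. is_step (ds ! i)) \<and> (ds \<noteq> [] \<longrightarrow> sgoal (ds ! 0) = sresult s) \<and>
     (\<forall>i. Suc i < length ds \<longrightarrow> sgoal (ds ! Suc i) = sresult (ds ! i))"
    proof (intro conjI allI impI)
      fix i assume "i < length ds" then show "is_step (ds ! i)" using r by fastforce
    next
      assume "ds \<noteq> []" then show "sgoal (ds ! 0) = sresult s" using r by fastforce
    next
      fix i assume "Suc i < length ds" then show "sgoal (ds ! Suc i) = sresult (ds ! i)"
        using r[THEN conjunct2, THEN conjunct2, rule_format, of "Suc i"] by simp
    qed
    then have "chain (sresult s) ds" using Cons by blast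
    moreover have "is_step s" "sgoal s = H" using r by auto
    ultimately show "chain H (s # ds)" by simp
  qed
qed

lemma fr_props: "fr W ds \<Longrightarrow> (\<forall>j<length ds. vars_clause (rclause (ds ! j)) \<inter> W = {} \<and>
   (\<forall>i<j. vars_clause (rclause (ds ! j)) \<inter> vars_clause (rclause (ds ! i)) = {}))"
proof (induction ds arbitrary: W)
  case Nil then show ?case by simp
next
  case (Cons s ds)
  have h: "vars_clause (rclause s) \<inter> W = {}" and f': "fr (W \<union> vars_clause (rclause s)) ds"
    using Cons.prems by auto
  note IH = Cons.IH[OF f']
  show ?case
  proof (intro allI impI)
    fix j assume j: "j < length (s # ds)"
    have a: "vars_clause (rclause ((s # ds) ! j)) \<inter> W = {}"
      using h IH j by (cases j) auto
    have b: "vars_clause (rclause ((s # ds) ! j)) \<inter> vars_clause (rclause ((s # ds) ! i)) = {}"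
      if i: "i < j" for i
    proof -
      obtain j' where j': "j = Suc j'" using i by (cases j) auto
      show ?thesis using IH j j' i by (cases i) auto
    qed
    show "vars_clause (rclause ((s # ds) ! j)) \<inter> W = {} \<and>
      (\<forall>i<j. vars_clause (rclause ((s # ds) ! j)) \<inter> vars_clause (rclause ((s # ds) ! i)) = {})"
      using a b by blast
  qed
qed

lemma fr_nvar: "fr W ds \<Longrightarrow> nvar ds \<inter> W = {}"
  by (induction ds arbitrary: W) (auto simp: nvar_def)

lemma main:
  fixes ds :: "('p, 'f, 'v) pstep list"
  assumes inf: "infinite (UNIV :: 'v set)" and SR: "si_scheduling_rule S"
  shows "set ds \<subseteq> S \<Longrightarrow> chain H ds \<Longrightarrow> H = goal_plus (shift_goal (subst_goal Gk lam) \<sigma>) Xk \<Longrightarrow>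
    plus_defined (shift_goal (subst_goal Gk lam) \<sigma>) Xk \<Longrightarrow> is_shifting \<sigma> \<Longrightarrow> is_pgoal Gk \<Longrightarrow>
    finite W \<Longrightarrow> vars_goal Gk \<subseteq> W \<Longrightarrow> P = dom H - dom Xk \<Longrightarrow>
    \<exists>dr. chain Gk dr \<and> set dr \<subseteq> S \<and> map sclause dr = subtempl ds P \<and> fr W dr"
proof (induction ds arbitrary: H Gk lam \<sigma> Xk W P)
  case Nil
  then show ?case by (intro exI[of _ "[]"]) simp
next
  case (Cons s ds)
  have sS: "s \<in> S" and dsS: "set ds \<subseteq> S" using Cons.prems(1) by auto
  have st: "is_step s" and sg: "sgoal s = H" and ch: "chain (sresult s) ds" using Cons.prems(2) by auto
  define p where "p = sel_prio H"
  define A where "A = shift_goal (subst_goal Gk lam) \<sigma>"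
  have H: "H = A ++ Xk" using Cons.prems(3) by (simp add: A_def goal_plus_def)
  have pdA: "dom A \<inter> dom Xk = {}" using Cons.prems(4) by (simp add: A_def plus_defined_def)
  have PA: "P = dom A" using Cons.prems(9) H pdA by auto
  have pH: "p \<in> dom H" using st sg unfolding is_step_def is_pgoal_def p_def sel_prio_def
    by (intro Min_in) auto
  show ?case
  proof (cases "p \<in> dom Xk")
    case True
    then have pP: "p \<notin> P" using PA pdA by auto
    obtain h B where c: "sclause s = (h, B)" by fastforce
    define Bs where "Bs = shift_goal (subst_goal B (sren s)) (sshift s)"
    define \<theta> where "\<theta> = smgu s"
    have pd: "plus_defined (goal_rest H) Bs" using st sg
      by (simp add: is_step_def Bs_def rclause_def subst_clause_def c)
    have pA: "p \<notin> dom A" using True pdA by auto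
    have gr: "goal_rest H = A ++ Xk(p := None)"
      using upd_add_right[OF pA, of Xk] H by (simp add: goal_rest_def p_def)
    define Xk' where "Xk' = subst_goal (Xk(p := None) ++ Bs) \<theta>"
    have res: "sresult s = goal_plus (shift_goal (subst_goal Gk (subst_comp lam \<theta>)) \<sigma>) Xk'"
    proof -
      have "sresult s = subst_goal (goal_rest H ++ Bs) \<theta>"
        by (simp add: sresult_def sg \<theta>_def goal_plus_def rclause_def subst_clause_def c Bs_def)
      also have "\<dots> = subst_goal A \<theta> ++ Xk'"
        unfolding gr Xk'_def by (simp add: subst_goal_add map_add_assoc)
      also have "subst_goal A \<theta> = shift_goal (subst_goal Gk (subst_comp lam \<theta>)) \<sigma>"
        by (simp add: A_def subst_shift subst_goal_comp)
      finally show ?thesis by (simp add: goal_plus_def)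
    qed
    have dA': "dom (shift_goal (subst_goal Gk (subst_comp lam \<theta>)) \<sigma>) = dom A"
      by (simp add: A_def dom_shift_goal')
    have pd': "plus_defined (shift_goal (subst_goal Gk (subst_comp lam \<theta>)) \<sigma>) Xk'"
    proof -
      have "dom (goal_rest H) = dom A \<union> (dom Xk - {p})" using gr by auto
      moreover have "dom Xk' = dom Bs \<union> (dom Xk - {p})" by (auto simp: Xk'_def)
      ultimately show ?thesis using pd pdA unfolding plus_defined_def dA' by blast
    qed
    have P': "P = dom (sresult s) - dom Xk'"
    proof -
      have "dom (sresult s) = dom A \<union> dom Xk'" using res dA' by (auto simp: goal_plus_def)
      moreover have "dom A \<inter> dom Xk' = {}" using pd' dA' by (simp add: plus_defined_def)
      ultimately show ?thesis using PA by blast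
    qed
    obtain dr where dr: "chain Gk dr" "set dr \<subseteq> S" "map sclause dr = subtempl ds P" "fr W dr"
      using Cons.IH[OF dsS ch res pd' Cons.prems(5-8) P']
      by (elim exE conjE) (rule that; assumption)
    moreover have "subtempl (s # ds) P = subtempl ds P" using pP p_def sg by simp
    ultimately show ?thesis by (intro exI[of _ dr]) simp
  next
    case False
    have pP: "p \<in> P" using False pH Cons.prems(9) by auto
    obtain s1 \<delta> \<rho> where s1: "s1 \<in> S" "is_step s1" "sgoal s1 = Gk" "sclause s1 = sclause s"
      "vars_clause (rclause s1) \<inter> W = {}" "is_pgoal (sresult s1)"
      "vars_goal (sresult s1) \<subseteq> W \<union> vars_clause (rclause s1)" "is_shifting \<rho>"
      "sresult s = goal_plus (shift_goal (subst_goal (sresult s1) \<delta>) \<rho>) (subst_goal Xk (smgu s))"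
      "plus_defined (shift_goal (subst_goal (sresult s1) \<delta>) \<rho>) (subst_goal Xk (smgu s))"
      "dom (sresult s) - dom (subst_goal Xk (smgu s)) =
         (dom H - dom Xk - {sel_prio H}) \<union> sshift s ` dom (snd (sclause s))"
      using g_step[OF inf SR sS st sg Cons.prems(3,4,5,6,7,8) False[unfolded p_def]]
      by (elim exE conjE) (rule that; assumption)
    have finW': "finite (W \<union> vars_clause (rclause s1))"
      using Cons.prems(7) s1(2) finite_vars_clause[of "rclause s1"]
      by (auto simp: is_step_def rclause_def subst_clause_def is_pgoal_def)
    define P' where "P' = (P - {p}) \<union> sshift s ` dom (snd (sclause s))"
    have P': "P' = dom (sresult s) - dom (subst_goal Xk (smgu s))"
      using s1(11) Cons.prems(9) by (simp add: P'_def p_def)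
    obtain dr where dr: "chain (sresult s1) dr" "set dr \<subseteq> S" "map sclause dr = subtempl ds P'"
      "fr (W \<union> vars_clause (rclause s1)) dr"
      using Cons.IH[OF dsS ch s1(9) s1(10) s1(8) s1(6) finW' s1(7) P']
      by (elim exE conjE) (rule that; assumption)
    have "subtempl (s # ds) P = sclause s # subtempl ds P'" using pP p_def sg by (simp add: P'_def)
    then show ?thesis
      using dr s1(1-5) by (intro exI[of _ "s1 # dr"]) simp
  qed
qed

theorem lemmaL3p2p1:
  fixes S :: "('p, 'f, 'v) pstep set" and V :: "'v set"
    and G X :: "('p, 'f, 'v) pgoal" and \<gamma> :: "('f, 'v) subst" and \<tau> :: "rat \<Rightarrow> rat"
    and D :: "('p, 'f, 'v) clause list" and ds :: "('p, 'f, 'v) pstep list"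
  assumes "infinite (UNIV :: 'v set)"
    and "si_scheduling_rule S"
    and "finite V"
    and "is_pgoal G" and "is_pgoal X"
    and "is_shifting \<tau>"
    and "plus_defined X (shift_goal (subst_goal G \<gamma>) \<tau>)"
    and "deriv_via S (goal_plus X (shift_goal (subst_goal G \<gamma>) \<tau>)) D ds"
  shows "\<exists>dr. deriv_via S G (subtempl ds (dom (shift_goal (subst_goal G \<gamma>) \<tau>))) dr
              \<and> nvar dr \<inter> V = {}"
proof -
  define A where "A = shift_goal (subst_goal G \<gamma>) \<tau>"
  define H where "H = goal_plus X A"
  have dis: "dom A \<inter> dom X = {}" using assms(7) by (auto simp: plus_defined_def A_def)
  have HA: "H = goal_plus A X" unfolding H_def goal_plus_def using dis by (intro map_add_comm) blast
  have der: "is_deriv H ds" and dsS: "set ds \<subseteq> S" using assms(8) by (auto simp: deriv_via_def H_def A_def)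
  have ch: "chain H ds" using der by (simp add: chain_iff is_deriv_def)
  have pd: "plus_defined A X" using dis by (simp add: plus_defined_def Int_commute)
  have P: "dom A = dom H - dom X" using dis by (auto simp: H_def goal_plus_def)
  have finW: "finite (vars_goal G \<union> V)" using assms(3,4) finite_vars_goal by blast
  obtain dr where dr: "chain G dr" "set dr \<subseteq> S" "map sclause dr = subtempl ds (dom A)"
    "fr (vars_goal G \<union> V) dr"
    using main[OF assms(1,2) dsS ch HA[unfolded A_def] pd[unfolded A_def] assms(6,4) finW _ P[unfolded A_def]]
    by (auto simp: A_def)
  have "is_deriv G dr"
    using dr(1) fr_props[OF dr(4)] assms(4) unfolding is_deriv_def chain_iff by blast
  moreover have "nvar dr \<inter> V = {}" using fr_nvar[OF dr(4)] by blast
  ultimately show ?thesis using dr by (auto simp: deriv_via_def template_def A_def)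
qed


end
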